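(* For even $m\ge 18$, let $G^{\mathrm{same}}_m$ be the graph with vertex set $\{u^*\}\cup A\cup\{z,x,y\}\cup L$, where $A=\{a_1,a_2,a_3,a_4\}$ induces a $K_4$, $|L|=m-14$, $u^*$ is adjacent to every vertex of $A\cup\{z\}\cup L$, $z$ is adjacent to $x$ and $y$, $x$ is adjacent to $y$, and there are no other edges (so $G^{\mathrm{same}}_m$ has $m$ edges). Its spectral radius equals the largest root of \[ f_{\mathrm{same}}(x)=x^5-4x^4+(10-m)x^3+(4m-42)x^2+(19-m)x+84-6m, \] and $\rho(G^{\mathrm{same}}_m)<\rho'(m)$.
   Context: $\rho(G)$ denotes the adjacency spectral radius. For even $m$, $\rho'(m)$ is the largest real root of $p_m(x)=x^4-mx^2-(m-2)x+\frac{m}{2}-1$. *)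

theory Defs
  imports "Jordan_Normal_Form.Spectral_Radius" "HOL-Computational_Algebra.Polynomial"
begin

definition adj_matrix :: "nat \<Rightarrow> (nat \<Rightarrow> nat \<Rightarrow> bool) \<Rightarrow> complex mat" where
  "adj_matrix n E = mat n n (\<lambda>(i,j). if E i j then 1 else 0)"

definition graph_spectral_radius :: "nat \<Rightarrow> (nat \<Rightarrow> nat \<Rightarrow> bool) \<Rightarrow> real" where
  "graph_spectral_radius n E = spectral_radius (adj_matrix n E)"

definition largest_real_root :: "real poly \<Rightarrow> real" where
  "largest_real_root p = Max {x. poly p x = 0}"

text \<open>G^same_m on vertices {0..<m-6}: 0 = u*, 1..4 = A, 5 = z, 6 = x, 7 = y,
  8..m-7 = L (m-14 vertices).\<close>
definition gsame_edge :: "nat \<Rightarrow> nat \<Rightarrow> nat \<Rightarrow> bool" where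
  "gsame_edge m i j \<longleftrightarrow>
     (i = 0 \<and> ((1 \<le> j \<and> j \<le> 5) \<or> (8 \<le> j \<and> j < m - 6)))
   \<or> (1 \<le> i \<and> i < j \<and> j \<le> 4)
   \<or> (i = 5 \<and> (j = 6 \<or> j = 7))
   \<or> (i = 6 \<and> j = 7)"

definition gsame_adj :: "nat \<Rightarrow> nat \<Rightarrow> nat \<Rightarrow> bool" where
  "gsame_adj m i j \<longleftrightarrow> i < m - 6 \<and> j < m - 6 \<and> (gsame_edge m i j \<or> gsame_edge m j i)"

definition f_same :: "nat \<Rightarrow> real poly" where
  "f_same m = [: 84 - 6 * real m, 19 - real m, 4 * real m - 42, 10 - real m, -4, 1 :]"

definition p_poly :: "nat \<Rightarrow> real poly" where
  "p_poly m = [: real m / 2 - 1, -(real m - 2), - real m, 0, 1 :]"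

definition rho' :: "nat \<Rightarrow> real" where
  "rho' m = largest_real_root (p_poly m)"

end

theory Submission imports Defs begin

lemma perron_bound:
  fixes A :: "complex mat" and B :: "nat \<Rightarrow> nat \<Rightarrow> real" and w :: "nat \<Rightarrow> real"
  assumes A: "A \<in> carrier_mat n n"
    and AB: "\<And>i j. i < n \<Longrightarrow> j < n \<Longrightarrow> A $$ (i,j) = complex_of_real (B i j)"
    and Bnn: "\<And>i j. B i j \<ge> 0"
    and pos: "\<And>i. i < n \<Longrightarrow> w i > 0"
    and eq: "\<And>i. i < n \<Longrightarrow> (\<Sum>j<n. B i j * w j) = lam * w i"
    and ev: "eigenvalue A mu"
  shows "norm mu \<le> lam"
proof -
  obtain u where u: "u \<in> carrier_vec n" "u \<noteq> 0\<^sub>v n" "A *\<^sub>v u = mu \<cdot>\<^sub>v u"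
    using ev A unfolding eigenvalue_def eigenvector_def by auto
  from u obtain j0 where j0: "j0 < n" "u $ j0 \<noteq> 0"
    by (metis carrier_vecD eq_vecI index_zero_vec(1,2))
  define f where "f j = norm (u $ j) / w j" for j
  define r where "r = Max (f ` {..<n})"
  have fin: "finite (f ` {..<n})" by simp
  have ne: "f ` {..<n} \<noteq> {}" using j0 by auto
  obtain k where k: "k < n" "r = f k" using Max_in[OF fin ne] unfolding r_def by auto
  have rge: "\<And>j. j < n \<Longrightarrow> f j \<le> r" unfolding r_def using fin by auto
  have "f j0 > 0" unfolding f_def using j0 pos by auto
  hence rpos: "r > 0" using rge[OF j0(1)] by linarith
  have uk: "norm (u $ k) = r * w k" using k pos[OF k(1)] unfolding f_def by auto
  have ukpos: "norm (u $ k) > 0" using uk rpos pos[OF k(1)] by simp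
  have bnd: "\<And>j. j < n \<Longrightarrow> norm (u $ j) \<le> r * w j"
    using rge pos unfolding f_def by (simp add: divide_le_eq mult.commute)
  have "mu * u $ k = (A *\<^sub>v u) $ k" using u k by simp
  also have "\<dots> = (\<Sum>j\<in>{0..<n}. A $$ (k,j) * u $ j)"
    using A u(1) k by (simp add: scalar_prod_def)
  also have "\<dots> = (\<Sum>j<n. complex_of_real (B k j) * u $ j)"
    using AB k by (simp add: atLeast0LessThan)
  finally have e: "mu * u $ k = (\<Sum>j<n. complex_of_real (B k j) * u $ j)" .
  have "norm mu * norm (u $ k) = norm (\<Sum>j<n. complex_of_real (B k j) * u $ j)"
    by (metis e norm_mult)
  also have "\<dots> \<le> (\<Sum>j<n. norm (complex_of_real (B k j) * u $ j))" by (rule norm_sum)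
  also have "\<dots> = (\<Sum>j<n. B k j * norm (u $ j))" using Bnn by (simp add: norm_mult)
  also have "\<dots> \<le> (\<Sum>j<n. B k j * (r * w j))"
    by (intro sum_mono mult_left_mono) (use bnd Bnn in auto)
  also have "\<dots> = r * (\<Sum>j<n. B k j * w j)" by (simp add: sum_distrib_left algebra_simps)
  also have "\<dots> = lam * norm (u $ k)" using eq[OF k(1)] uk by simp
  finally show ?thesis using ukpos by simp
qed

lemma root_above:
  fixes p :: "real poly"
  assumes "lead_coeff p > 0" "poly p a < 0"
  shows "\<exists>x > a. poly p x = 0"
proof -
  obtain N where N: "\<forall>x \<ge> N. poly p x \<ge> lead_coeff p" using poly_pinfty_gt_lc[OF assms(1)] by auto
  define b where "b = max N (a + 1)"
  have "poly p b > 0" using N assms(1) unfolding b_def by (meson max.cobounded1 less_le_trans)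
  from poly_IVT_pos[OF _ assms(2) this] show ?thesis unfolding b_def
    by (metis less_add_one max_less_iff_conj less_max_iff_disj)
qed

lemma pf: "poly (f_same m) l = 84 - 6*real m + (19-real m)*l + (4*real m-42)*l^2 + (10-real m)*l^3 - 4*l^4 + l^5"
  unfolding f_same_def by (simp add: algebra_simps power2_eq_square power3_eq_cube power4_eq_xxxx power_def)
lemma pp: "poly (p_poly m) l = real m/2 - 1 - (real m - 2)*l - real m*l^2 + l^4"
  unfolding p_poly_def by (simp add: algebra_simps power2_eq_square power3_eq_cube power4_eq_xxxx power_def)
lemma pf2: "poly (f_same m) l = l * (l*(l-3)*(l-2)*(l+1)) - (4 * (l*(l-2)*(l+1)) + l*(l-1)*(l-3) + (real m - 14) * ((l-3)*(l-2)*(l+1)))"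
  unfolding pf by (simp add: algebra_simps power2_eq_square power3_eq_cube power4_eq_xxxx power_def)
lemma ident: "2 * ((l^3 - 4*l^2 + l + 6) * poly (p_poly m) l)
      + (-72 + 127*l + 236*l^2 - 38*l^3 - 76*l^4 + 9*l^5 + 2*l^6)
      = (2*l^2 + 2*l - 1) * poly (f_same m) l"
    unfolding pf pp by (simp add: algebra_simps power2_eq_square power3_eq_cube power4_eq_xxxx power_def)

definition Bm :: "nat \<Rightarrow> nat \<Rightarrow> nat \<Rightarrow> real" where
  "Bm m i j = (if gsame_adj m i j then 1 else 0)"

definition wv :: "real \<Rightarrow> nat \<Rightarrow> real" where
  "wv l i = (if i = 0 then l*(l-3)*(l-2)*(l+1) else if i \<le> 4 then l*(l-2)*(l+1)
     else if i = 5 then l*(l-1)*(l-3) else if i \<le> 7 then l*(l-3) else (l-3)*(l-2)*(l+1))"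

lemma sum8: "(\<Sum>j<(8::nat). F j) = F 0 + F 1 + F 2 + F 3 + F 4 + F 5 + F 6 + (F 7 :: real)"
  by (simp add: eval_nat_numeral)

lemma rows:
  assumes m: "m \<ge> 18" and i: "i < m - 6" and root: "poly (f_same m) l = 0"
  shows "(\<Sum>j<m-6. Bm m i j * wv l j) = l * wv l i"
proof -
  have spl: "{..<m-6} = {..<8} \<union> {8..<m-6}" using m by auto
  have s1: "(\<Sum>j<m-6. Bm m i j * wv l j) = (\<Sum>j<8. Bm m i j * wv l j) + (\<Sum>j\<in>{8..<m-6}. Bm m i j * wv l j)"
    unfolding spl by (rule sum.union_disjoint) auto
  have t: "(\<Sum>j\<in>{8..<m-6}. Bm m i j * wv l j) = (if i = 0 then real (m-14) * ((l-3)*(l-2)*(l+1)) else 0)"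
  proof -
    have "(\<Sum>j\<in>{8..<m-6}. Bm m i j * wv l j) = (\<Sum>j\<in>{8..<m-6}. (if i = 0 then (l-3)*(l-2)*(l+1) else 0))"
      by (rule sum.cong) (use i in \<open>auto simp: Bm_def wv_def gsame_adj_def gsame_edge_def\<close>)
    also have "\<dots> = (if i = 0 then real (m-14) * ((l-3)*(l-2)*(l+1)) else 0)"
      using m by simp
    finally show ?thesis .
  qed
  have mm: "real (m - 14) = real m - 14" using m by simp
  have mf: "4 < m - 6" "5 < m - 6" "6 < m - 6" "7 < m - 6" using m by auto
  have c0: "l * (l*(l-3)*(l-2)*(l+1)) = 4 * (l*(l-2)*(l+1)) + l*(l-1)*(l-3) + (real m - 14) * ((l-3)*(l-2)*(l+1))"
    using root unfolding pf2 by simp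
  show ?thesis
  proof (cases "i < 8")
    case True
    then consider "i = 0" | "i = 1" | "i = 2" | "i = 3" | "i = 4" | "i = 5" | "i = 6" | "i = 7" by linarith
    then show ?thesis unfolding s1 t sum8 using m c0 mm mf
      by cases (simp_all add: Bm_def wv_def gsame_adj_def gsame_edge_def algebra_simps)
  next
    case False
    then show ?thesis unfolding s1 t sum8 using m i mf
      by (simp add: Bm_def wv_def gsame_adj_def gsame_edge_def algebra_simps)
  qed
qed

lemma h_pos:
  fixes l :: real assumes "l > 21/5"
  shows "-72 + 127*l + 236*l^2 - 38*l^3 - 76*l^4 + 9*l^5 + 2*l^6 > 0"
proof -
  define z where "z = 5*l - 21"
  have z: "z > 0" using assms z_def by simp
  have "15625 * (-72 + 127*l + 236*l^2 - 38*l^3 - 76*l^4 + 9*l^5 + 2*l^6) =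
     14070012 + 22691462*z + 4822730*z^2 + 404540*z^3 + 16055*z^4 + 297*z^5 + 2*z^6"
    unfolding z_def by (simp add: algebra_simps power2_eq_square power3_eq_cube power4_eq_xxxx power_def)
  also have "\<dots> > 0" using z by (intro add_pos_nonneg add_nonneg_nonneg mult_nonneg_nonneg) auto
  finally show ?thesis by simp
qed

theorem proposition6p2:
  fixes m :: nat
  assumes "even m" and "m \<ge> 18"
  shows "graph_spectral_radius (m - 6) (gsame_adj m) = largest_real_root (f_same m)
     \<and> graph_spectral_radius (m - 6) (gsame_adj m) < rho' m"
proof -
  have m: "m \<ge> 18" by fact
  define n where "n = m - 6"
  define l where "l = largest_real_root (f_same m)"
  define S where "S = {x. poly (f_same m) x = 0}"
  have fnz: "f_same m \<noteq> 0" unfolding f_same_def by simp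
  have lcf: "lead_coeff (f_same m) = 1" unfolding f_same_def by simp
  have finS: "finite S" unfolding S_def by (rule poly_roots_finite[OF fnz])
  have "poly (f_same m) (21/5) < 0" unfolding f_same_def using m by (simp add: algebra_simps)
  from root_above[OF _ this] lcf obtain x0 where x0: "x0 > 21/5" "poly (f_same m) x0 = 0" by auto
  have x0S: "x0 \<in> S" using x0 S_def by simp
  have lS: "l \<in> S" unfolding l_def largest_real_root_def S_def[symmetric] using finS x0S by (intro Max_in) auto
  have lge: "l \<ge> x0" unfolding l_def largest_real_root_def S_def[symmetric] using finS x0S by simp
  have l: "l > 21/5" using lge x0 by simp
  have root: "poly (f_same m) l = 0" using lS S_def by simp
  define M where "M = adj_matrix n (gsame_adj m)"
  have Mc: "M \<in> carrier_mat n n" unfolding M_def adj_matrix_def by simp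
  have MB: "\<And>i j. i < n \<Longrightarrow> j < n \<Longrightarrow> M $$ (i,j) = complex_of_real (Bm m i j)"
    unfolding M_def adj_matrix_def Bm_def by simp
  have wpos: "\<And>i. wv l i > 0" using l unfolding wv_def by simp
  have rowsn: "\<And>i. i < n \<Longrightarrow> (\<Sum>j<n. Bm m i j * wv l j) = l * wv l i"
    unfolding n_def using rows[OF m _ root] by blast
  define v where "v = vec n (\<lambda>j. complex_of_real (wv l j))"
  have n0: "0 < n" unfolding n_def using m by simp
  have Mv: "M *\<^sub>v v = complex_of_real l \<cdot>\<^sub>v v"
  proof (rule eq_vecI)
    fix i assume "i < dim_vec (complex_of_real l \<cdot>\<^sub>v v)"
    hence i: "i < n" unfolding v_def by simp
    have "(M *\<^sub>v v) $ i = (\<Sum>j\<in>{0..<n}. M $$ (i,j) * v $ j)"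
      using Mc i unfolding v_def by (simp add: scalar_prod_def)
    also have "\<dots> = (\<Sum>j<n. complex_of_real (Bm m i j * wv l j))"
      using MB i unfolding v_def by (simp add: atLeast0LessThan)
    also have "\<dots> = complex_of_real (\<Sum>j<n. Bm m i j * wv l j)" by simp
    also have "\<dots> = (complex_of_real l \<cdot>\<^sub>v v) $ i" using rowsn[OF i] i unfolding v_def by simp
    finally show "(M *\<^sub>v v) $ i = (complex_of_real l \<cdot>\<^sub>v v) $ i" .
  qed (use Mc v_def in simp)
  have "eigenvector M v (complex_of_real l)"
    unfolding eigenvector_def
  proof (intro conjI)
    show "v \<in> carrier_vec (dim_row M)" using Mc v_def by simp
    have "v $ 0 \<noteq> 0" using n0 wpos[of 0] unfolding v_def by simp
    thus "v \<noteq> 0\<^sub>v (dim_row M)" using n0 Mc by auto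
  qed (rule Mv)
  hence evl: "complex_of_real l \<in> spectrum M" unfolding spectrum_def eigenvalue_def by auto
  have bnd: "\<And>mu. mu \<in> spectrum M \<Longrightarrow> norm mu \<le> l"
    by (rule perron_bound[OF Mc MB _ wpos rowsn]) (auto simp: Bm_def spectrum_def)
  have sr: "graph_spectral_radius (m - 6) (gsame_adj m) = l"
    unfolding graph_spectral_radius_def spectral_radius_def n_def[symmetric] M_def[symmetric]
  proof (rule Max_eqI)
    show "finite (norm ` spectrum M)" using card_finite_spectrum[OF Mc] by simp
    show "\<And>y. y \<in> norm ` spectrum M \<Longrightarrow> y \<le> l" using bnd by auto
    show "l \<in> norm ` spectrum M" using evl l by (intro image_eqI[of _ _ "complex_of_real l"]) auto
  qed
  note id2 = ident[of l m]
  have qpos: "l^3 - 4*l^2 + l + 6 > 0"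
  proof -
    have "l^3 - 4*l^2 + l + 6 = (l-3)*(l-2)*(l+1)" by (simp add: algebra_simps power2_eq_square power3_eq_cube)
    thus ?thesis using l by simp
  qed
  have "(l^3 - 4*l^2 + l + 6) * poly (p_poly m) l < 0" using id2 root h_pos[OF l] by simp
  hence pneg: "poly (p_poly m) l < 0" using qpos by (simp add: mult_less_0_iff)
  have pnz: "p_poly m \<noteq> 0" unfolding p_poly_def by simp
  have lcp: "lead_coeff (p_poly m) = 1" unfolding p_poly_def by simp
  obtain r where r: "r > l" "poly (p_poly m) r = 0" using root_above[of "p_poly m" l] lcp pneg by auto
  have "r \<le> rho' m" unfolding rho'_def largest_real_root_def
    using poly_roots_finite[OF pnz] r by simp
  thus ?thesis using sr r l_def by simp
qed

end
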